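(* In the setting described in the context, for all $k\ge0$: if $u_{k-1}(s)>0$ for all states $s\in S\setminus W_2$, then for all player-2 strategies $\pi_2$ we have $\Pr_s^{\overline{\eta}_k,\pi_2}(\mathrm{Reach}(T\cup W_2))=1$ for all $s\in S$.
   Context: Concurrent game structure $G=(S,M,\Gamma_1,\Gamma_2,\delta)$: finite states, finite moves, nonempty move sets $\Gamma_i(s)$, $\delta(s,a_1,a_2)\in\mathrm{Distr}(S)$ (simultaneous independent moves). Selectors assign to each state a distribution on available moves; $\overline{\xi}$ is the memoryless strategy playing $\xi$ forever; $\Pr_s^{\pi_1,\pi_2}$ is the induced measure on plays from $s$; $\mathrm{Reach}(X)$ is the set of plays visiting $X$. For a valuation $v:S\to[0,1]$: $\mathrm{Pre}_{\xi_1,\xi_2}(v)(s)=\sum_{a,b}\sum_tv(t)\delta(s,a,b)(t)\xi_1(s)(a)\xi_2(s)(b)$, $\mathrm{Pre}_{1:\xi_1}(v)(s)=\inf_{\xi_2}\mathrm{Pre}_{\xi_1,\xi_2}(v)(s)$, $\mathrm{Pre}_1(v)(s)=\sup_{\xi_1}\mathrm{Pre}_{1:\xi_1}(v)(s)$. Fix $T\subseteq S$; $W_2=\{s:\sup_{\pi_1}\inf_{\pi_2}\Pr_s^{\pi_1,\pi_2}(\mathrm{Reach}(T))=0\}$; all states of $T\cup W_2$ are assumed absorbing. Value iteration: $u_0=[T]$ (indicator of $T$), $u_{k+1}=\mathrm{Pre}_1(u_k)$. For each $j\ge1$ fix a player-1 selector $\zeta_j$ with $\mathrm{Pre}_{1:\zeta_j}(u_{j-1})=\mathrm{Pre}_1(u_{j-1})$.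 Entry time $\ell_k(s)=\min\{j\le k:u_j(s)=u_k(s)\}$. Selector $\eta_k$: $\eta_k(s)=\zeta_{\ell_k(s)}(s)$ if $\ell_k(s)>0$, and $\eta_k(s)$ uniform on $\Gamma_1(s)$ if $\ell_k(s)=0$. *)

theory Defs
  imports "HOL-Probability.Probability"
begin

text \<open>Histories (finite nonempty sequences of states) are lists; a strategy maps
  a history to a distribution over moves.\<close>

definition is_selector :: "('s \<Rightarrow> 'm set) \<Rightarrow> ('s \<Rightarrow> 'm pmf) \<Rightarrow> bool" where
  "is_selector Gam xi \<longleftrightarrow> (\<forall>s. set_pmf (xi s) \<subseteq> Gam s)"

definition is_strategy :: "('s \<Rightarrow> 'm set) \<Rightarrow> ('s list \<Rightarrow> 'm pmf) \<Rightarrow> bool" where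
  "is_strategy Gam st \<longleftrightarrow> (\<forall>h. h \<noteq> [] \<longrightarrow> set_pmf (st h) \<subseteq> Gam (last h))"

definition memoryless :: "('s \<Rightarrow> 'm pmf) \<Rightarrow> ('s list \<Rightarrow> 'm pmf)" where
  "memoryless xi = (\<lambda>h. xi (last h))"

definition Pre_pair ::
  "('s::finite \<Rightarrow> 'm::finite \<Rightarrow> 'm \<Rightarrow> 's pmf) \<Rightarrow> ('s \<Rightarrow> 'm pmf) \<Rightarrow> ('s \<Rightarrow> 'm pmf)
    \<Rightarrow> ('s \<Rightarrow> real) \<Rightarrow> 's \<Rightarrow> real" where
  "Pre_pair \<delta> xi1 xi2 v s =
     (\<Sum>a\<in>UNIV. \<Sum>b\<in>UNIV. \<Sum>t\<in>UNIV. v t * pmf (\<delta> s a b) t * pmf (xi1 s) a * pmf (xi2 s) b)"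

definition Pre1_sel ::
  "('s::finite \<Rightarrow> 'm::finite set) \<Rightarrow> ('s \<Rightarrow> 'm \<Rightarrow> 'm \<Rightarrow> 's pmf) \<Rightarrow> ('s \<Rightarrow> 'm pmf)
    \<Rightarrow> ('s \<Rightarrow> real) \<Rightarrow> 's \<Rightarrow> real" where
  "Pre1_sel Gam2 \<delta> xi1 v s = (INF xi2 \<in> {xi2. is_selector Gam2 xi2}. Pre_pair \<delta> xi1 xi2 v s)"

definition Pre1 ::
  "('s::finite \<Rightarrow> 'm::finite set) \<Rightarrow> ('s \<Rightarrow> 'm set) \<Rightarrow> ('s \<Rightarrow> 'm \<Rightarrow> 'm \<Rightarrow> 's pmf)
    \<Rightarrow> ('s \<Rightarrow> real) \<Rightarrow> 's \<Rightarrow> real" where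
  "Pre1 Gam1 Gam2 \<delta> v s = (SUP xi1 \<in> {xi1. is_selector Gam1 xi1}. Pre1_sel Gam2 \<delta> xi1 v s)"

primrec reach_within ::
  "('s::finite \<Rightarrow> 'm::finite \<Rightarrow> 'm \<Rightarrow> 's pmf) \<Rightarrow> ('s list \<Rightarrow> 'm pmf) \<Rightarrow> ('s list \<Rightarrow> 'm pmf)
    \<Rightarrow> 's set \<Rightarrow> nat \<Rightarrow> 's list \<Rightarrow> real" where
  "reach_within \<delta> st1 st2 X 0 h = (if last h \<in> X then 1 else 0)"
| "reach_within \<delta> st1 st2 X (Suc n) h =
     (if last h \<in> X then 1 else
       (\<Sum>a\<in>UNIV. \<Sum>b\<in>UNIV. \<Sum>t\<in>UNIV.
          pmf (st1 h) a * pmf (st2 h) b * pmf (\<delta> (last h) a b) t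
          * reach_within \<delta> st1 st2 X n (h @ [t])))"

text \<open>Pr_s^{st1,st2}(Reach X), as the limit (supremum) of the probabilities of
  reaching X within n steps (continuity of the measure from below).\<close>
definition prob_reach ::
  "('s::finite \<Rightarrow> 'm::finite \<Rightarrow> 'm \<Rightarrow> 's pmf) \<Rightarrow> ('s list \<Rightarrow> 'm pmf) \<Rightarrow> ('s list \<Rightarrow> 'm pmf)
    \<Rightarrow> 's set \<Rightarrow> 's \<Rightarrow> real" where
  "prob_reach \<delta> st1 st2 X s = (SUP n. reach_within \<delta> st1 st2 X n [s])"

definition W2 ::
  "('s::finite \<Rightarrow> 'm::finite set) \<Rightarrow> ('s \<Rightarrow> 'm set) \<Rightarrow> ('s \<Rightarrow> 'm \<Rightarrow> 'm \<Rightarrow> 's pmf)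
    \<Rightarrow> 's set \<Rightarrow> 's set" where
  "W2 Gam1 Gam2 \<delta> T =
     {s. (SUP st1 \<in> {st1. is_strategy Gam1 st1}.
            INF st2 \<in> {st2. is_strategy Gam2 st2}. prob_reach \<delta> st1 st2 T s) = 0}"

primrec val_iter ::
  "('s::finite \<Rightarrow> 'm::finite set) \<Rightarrow> ('s \<Rightarrow> 'm set) \<Rightarrow> ('s \<Rightarrow> 'm \<Rightarrow> 'm \<Rightarrow> 's pmf)
    \<Rightarrow> 's set \<Rightarrow> nat \<Rightarrow> 's \<Rightarrow> real" where
  "val_iter Gam1 Gam2 \<delta> T 0 = (\<lambda>s. if s \<in> T then 1 else 0)"
| "val_iter Gam1 Gam2 \<delta> T (Suc k) = Pre1 Gam1 Gam2 \<delta> (val_iter Gam1 Gam2 \<delta> T k)"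

definition entry_time :: "(nat \<Rightarrow> 's \<Rightarrow> real) \<Rightarrow> nat \<Rightarrow> 's \<Rightarrow> nat" where
  "entry_time u k s = (LEAST j. j \<le> k \<and> u j s = u k s)"

definition eta :: "('s \<Rightarrow> 'm set) \<Rightarrow> (nat \<Rightarrow> 's \<Rightarrow> 'm pmf) \<Rightarrow> (nat \<Rightarrow> 's \<Rightarrow> real)
    \<Rightarrow> nat \<Rightarrow> 's \<Rightarrow> 'm pmf" where
  "eta Gam1 \<zeta> u k s =
     (if entry_time u k s > 0 then \<zeta> (entry_time u k s) s else pmf_of_set (Gam1 s))"

end

theory Submission imports Defs begin

definition wsum :: "'m pmf \<Rightarrow> 'm pmf \<Rightarrow> ('m \<Rightarrow> 'm \<Rightarrow> 's pmf) \<Rightarrow> ('s \<Rightarrow> real) \<Rightarrow> real" where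
  "wsum p q r f = (\<Sum>a\<in>UNIV. \<Sum>b\<in>UNIV. \<Sum>t\<in>UNIV. pmf p a * pmf q b * pmf (r a b) t * f t)"

lemma sum_pmf_UNIV: "(\<Sum>x\<in>(UNIV::'a::finite set). pmf p x) = 1"
  by (rule sum_pmf_eq_1) auto

lemma wsum_const: "wsum p q r (\<lambda>t. c) = (c::real)" for p q :: "'m::finite pmf" and r :: "_ \<Rightarrow> _ \<Rightarrow> 's::finite pmf"
proof -
  have "wsum p q r (\<lambda>t. c) = (\<Sum>a\<in>UNIV. \<Sum>b\<in>UNIV. pmf p a * pmf q b * c * (\<Sum>t\<in>UNIV. pmf (r a b) t))"
    unfolding wsum_def by (simp add: sum_distrib_left mult_ac)
  also have "\<dots> = (\<Sum>a\<in>UNIV. \<Sum>b\<in>UNIV. pmf p a * pmf q b) * c"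
    by (simp add: sum_pmf_UNIV sum_distrib_right)
  also have "\<dots> = (\<Sum>a\<in>UNIV. pmf p a) * (\<Sum>b\<in>UNIV. pmf q b) * c"
    by (simp add: sum_product)
  also have "\<dots> = c" by (simp add: sum_pmf_UNIV)
  finally show ?thesis .
qed

lemma wsum_mono: "(\<And>t. f t \<le> g t) \<Longrightarrow> wsum p q r f \<le> wsum p q r g"
  unfolding wsum_def by (intro sum_mono mult_left_mono) auto

lemma wsum_diff: "wsum p q r (\<lambda>t. c - f t) = (c::real) - wsum p q r f" for p q :: "'m::finite pmf" and r :: "_ \<Rightarrow> _ \<Rightarrow> 's::finite pmf"
proof -
  have "wsum p q r (\<lambda>t. c - f t) = wsum p q r (\<lambda>t. c) - wsum p q r f"
    unfolding wsum_def by (simp add: right_diff_distrib sum_subtractf)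
  then show ?thesis by (simp add: wsum_const)
qed

lemma wsum_multR: "wsum p q r (\<lambda>t. f t * B) = wsum p q r f * B"
  unfolding wsum_def by (simp add: sum_distrib_right sum_distrib_left mult_ac)

lemma wsum_cong_supp:
  assumes "\<And>a b t. pmf p a \<noteq> 0 \<Longrightarrow> pmf q b \<noteq> 0 \<Longrightarrow> pmf (r a b) t \<noteq> 0 \<Longrightarrow> f t = g t"
  shows "wsum p q r f = wsum p q r g"
  unfolding wsum_def by (intro sum.cong refl) (metis assms mult_eq_0_iff)

lemma wsum_bounds: "(\<forall>t. 0 \<le> f t \<and> f t \<le> 1) \<Longrightarrow> 0 \<le> wsum p q r f \<and> wsum p q r f \<le> 1"
  for p q :: "'m::finite pmf" and r :: "_ \<Rightarrow> _ \<Rightarrow> 's::finite pmf"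
  using wsum_mono[of "\<lambda>t. 0" f p q r] wsum_mono[of f "\<lambda>t. 1" p q r] by (simp add: wsum_const)

lemma wsum_swap: "wsum p q r f = (\<Sum>b\<in>UNIV. pmf q b * (\<Sum>a\<in>UNIV. \<Sum>t\<in>UNIV. pmf p a * pmf (r a b) t * f t))"
  unfolding wsum_def by (subst sum.swap) (simp add: sum_distrib_left mult_ac)

lemma wsum_return:
  fixes p :: "'m::finite pmf"
  shows "wsum p (return_pmf b) r f = (\<Sum>a\<in>UNIV. \<Sum>t\<in>UNIV. pmf p a * pmf (r a b) t * f t)"
proof -
  have e: "\<And>X. (\<Sum>ba\<in>(UNIV::'m set). of_bool (b = ba) * X ba) = (X b :: real)"
  proof -
    fix X :: "'m \<Rightarrow> real"
    have "(\<lambda>ba. of_bool (b = ba) * X ba) = (\<lambda>ba. if ba = b then X b else 0)" by auto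
    then show "(\<Sum>ba\<in>(UNIV::'m set). of_bool (b = ba) * X ba) = X b" by simp
  qed
  show ?thesis unfolding wsum_swap by (simp add: indicator_def e)
qed

lemma Pre_pair_wsum: "Pre_pair \<delta> x1 x2 v s = wsum (x1 s) (x2 s) (\<delta> s) v"
  unfolding Pre_pair_def wsum_def by (simp add: mult_ac)

lemma reach_Suc': "reach_within \<delta> st1 st2 X (Suc n) h =
  (if last h \<in> X then 1 else wsum (st1 h) (st2 h) (\<delta> (last h)) (\<lambda>t. reach_within \<delta> st1 st2 X n (h @ [t])))"
  by (simp add: wsum_def)


lemma reach_bounds:
  fixes \<delta> :: "'s::finite \<Rightarrow> 'm::finite \<Rightarrow> 'm \<Rightarrow> 's pmf"
  shows "0 \<le> reach_within \<delta> st1 st2 X n h \<and> reach_within \<delta> st1 st2 X n h \<le> 1"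
proof (induction n arbitrary: h)
  case 0 then show ?case by simp
next
  case (Suc n)
  show ?case unfolding reach_Suc' using wsum_bounds[of "\<lambda>t. reach_within \<delta> st1 st2 X n (h @ [t])" "st1 h" "st2 h" "\<delta> (last h)"] Suc.IH by auto
qed

lemma reach_compose:
  fixes \<delta> :: "'s::finite \<Rightarrow> 'm::finite \<Rightarrow> 'm \<Rightarrow> 's pmf"
  assumes B: "\<And>h'. h' \<noteq> [] \<Longrightarrow> 1 - reach_within \<delta> st1 st2 X m h' \<le> B" and B0: "0 \<le> B"
  shows "h \<noteq> [] \<Longrightarrow> 1 - reach_within \<delta> st1 st2 X (n + m) h \<le> (1 - reach_within \<delta> st1 st2 X n h) * B"
proof (induction n arbitrary: h)
  case 0
  then show ?case using B[of h] by (cases m) auto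
next
  case (Suc n)
  show ?case
  proof (cases "last h \<in> X")
    case True then show ?thesis by (simp add: reach_Suc')
  next
    case False
    have "1 - reach_within \<delta> st1 st2 X (Suc n + m) h
       = wsum (st1 h) (st2 h) (\<delta> (last h)) (\<lambda>t. 1 - reach_within \<delta> st1 st2 X (n + m) (h @ [t]))"
      using False by (simp del: reach_within.simps(2) add: reach_Suc' wsum_diff)
    also have "\<dots> \<le> wsum (st1 h) (st2 h) (\<delta> (last h)) (\<lambda>t. (1 - reach_within \<delta> st1 st2 X n (h @ [t])) * B)"
      by (rule wsum_mono) (rule Suc.IH, simp)
    also have "\<dots> = (1 - reach_within \<delta> st1 st2 X (Suc n) h) * B"
      using False by (simp del: reach_within.simps(2) add: reach_Suc' wsum_diff wsum_multR)
    finally show ?thesis .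
  qed
qed

lemma selector_ex: "\<forall>s. Gam s \<noteq> {} \<Longrightarrow> is_selector Gam (\<lambda>s. return_pmf (SOME x. x \<in> Gam s))"
  unfolding is_selector_def by (simp add: some_in_eq)

lemma Pre1_sel_bounds:
  fixes \<delta> :: "'s::finite \<Rightarrow> 'm::finite \<Rightarrow> 'm \<Rightarrow> 's pmf"
  assumes ne: "\<forall>s. Gam2 s \<noteq> {}" and v: "\<And>t. 0 \<le> v t \<and> v t \<le> 1"
  shows "0 \<le> Pre1_sel Gam2 \<delta> x1 v s \<and> Pre1_sel Gam2 \<delta> x1 v s \<le> 1"
proof -
  let ?S = "{xi2. is_selector Gam2 xi2}"
  let ?f = "\<lambda>xi2. Pre_pair \<delta> x1 xi2 v s"
  have b: "0 \<le> ?f x \<and> ?f x \<le> 1" for x unfolding Pre_pair_wsum using wsum_bounds[of v] v by blast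
  have ne': "?S \<noteq> {}" using selector_ex[OF ne] by blast
  have bdd: "bdd_below (?f ` ?S)" using b by (intro bdd_belowI[of _ 0]) auto
  have "0 \<le> Inf (?f ` ?S)" using b ne' by (intro cINF_greatest) auto
  moreover have "Inf (?f ` ?S) \<le> 1"
  proof -
    have "(\<lambda>s. return_pmf (SOME x. x \<in> Gam2 s)) \<in> ?S" using selector_ex[OF ne] by simp
    then have "Inf (?f ` ?S) \<le> ?f (\<lambda>s. return_pmf (SOME x. x \<in> Gam2 s))" by (rule cINF_lower[OF bdd])
    then show ?thesis using b by (meson order_trans)
  qed
  ultimately show ?thesis unfolding Pre1_sel_def by simp
qed

lemma Pre1_bounds:
  fixes \<delta> :: "'s::finite \<Rightarrow> 'm::finite \<Rightarrow> 'm \<Rightarrow> 's pmf"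
  assumes ne1: "\<forall>s. Gam1 s \<noteq> {}" and ne: "\<forall>s. Gam2 s \<noteq> {}" and v: "\<And>t. 0 \<le> v t \<and> v t \<le> 1"
  shows "0 \<le> Pre1 Gam1 Gam2 \<delta> v s \<and> Pre1 Gam1 Gam2 \<delta> v s \<le> 1"
proof -
  let ?S = "{xi1. is_selector Gam1 xi1}"
  let ?f = "\<lambda>xi1. Pre1_sel Gam2 \<delta> xi1 v s"
  have b: "0 \<le> ?f x \<and> ?f x \<le> 1" for x using Pre1_sel_bounds[of Gam2 v] ne v by blast
  have ne': "?S \<noteq> {}" using selector_ex[OF ne1] by blast
  have bdd: "bdd_above (?f ` ?S)" using b by (intro bdd_aboveI[of _ 1]) auto
  have "Sup (?f ` ?S) \<le> 1" using b ne' by (intro cSUP_least) auto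
  moreover have "0 \<le> Sup (?f ` ?S)"
  proof -
    have "(\<lambda>s. return_pmf (SOME x. x \<in> Gam1 s)) \<in> ?S" using selector_ex[OF ne1] by simp
    then have "?f (\<lambda>s. return_pmf (SOME x. x \<in> Gam1 s)) \<le> Sup (?f ` ?S)" by (rule cSUP_upper[OF _ bdd])
    then show ?thesis using b by (meson order_trans)
  qed
  ultimately show ?thesis unfolding Pre1_def by simp
qed

lemma Pre1_mono:
  fixes \<delta> :: "'s::finite \<Rightarrow> 'm::finite \<Rightarrow> 'm \<Rightarrow> 's pmf"
  assumes ne1: "\<forall>s. Gam1 s \<noteq> {}" and ne: "\<forall>s. Gam2 s \<noteq> {}" and v: "\<And>t. 0 \<le> v t \<and> v t \<le> 1"
    and w: "\<And>t. 0 \<le> w t \<and> w t \<le> 1" and vw: "\<And>t. v t \<le> w t"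
  shows "Pre1 Gam1 Gam2 \<delta> v s \<le> Pre1 Gam1 Gam2 \<delta> w s"
proof -
  let ?S = "{xi1. is_selector Gam1 xi1}"
  let ?S2 = "{xi2. is_selector Gam2 xi2}"
  have ne': "?S \<noteq> {}" using selector_ex[OF ne1] by blast
  have ne2: "?S2 \<noteq> {}" using selector_ex[OF ne] by blast
  have bddw: "bdd_above ((\<lambda>xi1. Pre1_sel Gam2 \<delta> xi1 w s) ` ?S)"
    using Pre1_sel_bounds[of Gam2 w] ne w by (intro bdd_aboveI[of _ 1]) auto
  have sel: "Pre1_sel Gam2 \<delta> x1 v s \<le> Pre1_sel Gam2 \<delta> x1 w s" for x1
  proof -
    have bddv: "bdd_below ((\<lambda>xi2. Pre_pair \<delta> x1 xi2 v s) ` ?S2)"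
      unfolding Pre_pair_wsum using wsum_bounds[of v] v by (intro bdd_belowI[of _ 0]) auto
    show ?thesis unfolding Pre1_sel_def
    proof (rule cINF_greatest[OF ne2])
      fix x2 assume "x2 \<in> ?S2"
      have "(INF xi2\<in>?S2. Pre_pair \<delta> x1 xi2 v s) \<le> Pre_pair \<delta> x1 x2 v s"
        by (rule cINF_lower[OF bddv \<open>x2 \<in> ?S2\<close>])
      also have "\<dots> \<le> Pre_pair \<delta> x1 x2 w s" unfolding Pre_pair_wsum by (rule wsum_mono[OF vw])
      finally show "(INF xi2\<in>?S2. Pre_pair \<delta> x1 xi2 v s) \<le> Pre_pair \<delta> x1 x2 w s" .
    qed
  qed
  show ?thesis unfolding Pre1_def
  proof (rule cSUP_least[OF ne'])
    fix x1 assume "x1 \<in> ?S"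
    show "Pre1_sel Gam2 \<delta> x1 v s \<le> (SUP xi1\<in>?S. Pre1_sel Gam2 \<delta> xi1 w s)"
      using sel[of x1] cSUP_upper[OF \<open>x1 \<in> ?S\<close> bddw] by linarith
  qed
qed


lemma val_bounds:
  fixes \<delta> :: "'s::finite \<Rightarrow> 'm::finite \<Rightarrow> 'm \<Rightarrow> 's pmf"
  assumes ne1: "\<forall>s. Gam1 s \<noteq> {}" and ne2: "\<forall>s. Gam2 s \<noteq> {}"
  shows "0 \<le> val_iter Gam1 Gam2 \<delta> T j s \<and> val_iter Gam1 Gam2 \<delta> T j s \<le> 1"
proof (induction j arbitrary: s)
  case 0 then show ?case by simp
next
  case (Suc j) then show ?case using Pre1_bounds[OF ne1 ne2 Suc.IH] by simp
qed

lemma val_base: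
  fixes \<delta> :: "'s::finite \<Rightarrow> 'm::finite \<Rightarrow> 'm \<Rightarrow> 's pmf"
  assumes ne1: "\<forall>s. Gam1 s \<noteq> {}" and ne2: "\<forall>s. Gam2 s \<noteq> {}"
    and abs: "\<forall>s \<in> T. \<forall>a \<in> Gam1 s. \<forall>b \<in> Gam2 s. \<delta> s a b = return_pmf s"
  shows "val_iter Gam1 Gam2 \<delta> T 0 s \<le> val_iter Gam1 Gam2 \<delta> T 1 s"
proof (cases "s \<in> T")
  case False
  then show ?thesis using val_bounds[OF ne1 ne2, of \<delta> T 1 s] by simp
next
  case True
  let ?u0 = "val_iter Gam1 Gam2 \<delta> T 0"
  let ?S = "{xi1. is_selector Gam1 xi1}"
  let ?S2 = "{xi2. is_selector Gam2 xi2}"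
  let ?x1 = "\<lambda>s. return_pmf (SOME x. x \<in> Gam1 s)"
  have x1S: "?x1 \<in> ?S" using selector_ex[OF ne1] by simp
  have ne2': "?S2 \<noteq> {}" using selector_ex[OF ne2] by blast
  have u0b: "\<forall>t. 0 \<le> ?u0 t \<and> ?u0 t \<le> 1" by simp
  have bdd: "bdd_above ((\<lambda>xi1. Pre1_sel Gam2 \<delta> xi1 ?u0 s) ` ?S)"
    using Pre1_sel_bounds[of Gam2 ?u0] ne2 by (intro bdd_aboveI[of _ 1]) auto
  have "1 \<le> Pre1_sel Gam2 \<delta> ?x1 ?u0 s"
    unfolding Pre1_sel_def
  proof (rule cINF_greatest[OF ne2'])
    fix x2 assume x2: "x2 \<in> ?S2"
    have "Pre_pair \<delta> ?x1 x2 ?u0 s = wsum (?x1 s) (x2 s) (\<delta> s) (\<lambda>t. 1)"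
      unfolding Pre_pair_wsum
    proof (rule wsum_cong_supp)
      fix a b t assume h: "pmf (?x1 s) a \<noteq> 0" "pmf (x2 s) b \<noteq> 0" "pmf (\<delta> s a b) t \<noteq> 0"
      have "a \<in> set_pmf (?x1 s)" by (subst set_pmf_iff) (rule h(1))
      then have "a \<in> Gam1 s" using x1S unfolding is_selector_def by blast
      moreover have "b \<in> set_pmf (x2 s)" by (subst set_pmf_iff) (rule h(2))
      then have "b \<in> Gam2 s" using x2 unfolding is_selector_def by blast
      ultimately have "\<delta> s a b = return_pmf s" using abs True by blast
      then have "t = s" using h(3) by (auto simp: indicator_def)
      then show "?u0 t = 1" using True by simp
    qed
    then show "1 \<le> Pre_pair \<delta> ?x1 x2 ?u0 s" by (simp add: wsum_const)
  qed
  also have "\<dots> \<le> Pre1 Gam1 Gam2 \<delta> ?u0 s" unfolding Pre1_def by (rule cSUP_upper[OF x1S bdd])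
  finally show ?thesis using True by simp
qed

lemma val_mono:
  fixes \<delta> :: "'s::finite \<Rightarrow> 'm::finite \<Rightarrow> 'm \<Rightarrow> 's pmf"
  assumes ne1: "\<forall>s. Gam1 s \<noteq> {}" and ne2: "\<forall>s. Gam2 s \<noteq> {}"
    and abs: "\<forall>s \<in> T. \<forall>a \<in> Gam1 s. \<forall>b \<in> Gam2 s. \<delta> s a b = return_pmf s"
    and jj: "j \<le> j'"
  shows "val_iter Gam1 Gam2 \<delta> T j s \<le> val_iter Gam1 Gam2 \<delta> T j' s"
proof -
  have step: "val_iter Gam1 Gam2 \<delta> T n s \<le> val_iter Gam1 Gam2 \<delta> T (Suc n) s" for n s
  proof (induction n arbitrary: s)
    case 0 then show ?case using val_base[OF ne1 ne2 abs] by simp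
  next
    case (Suc n)
    show ?case using Pre1_mono[OF ne1 ne2 val_bounds[OF ne1 ne2] val_bounds[OF ne1 ne2] Suc.IH] by simp
  qed
  show ?thesis using lift_Suc_mono_le[of "\<lambda>n. val_iter Gam1 Gam2 \<delta> T n s", OF step jj] .
qed

lemma entry_time_props:
  shows "entry_time u k s \<le> k \<and> u (entry_time u k s) s = u k s"
    and "j \<le> k \<Longrightarrow> u j s = u k s \<Longrightarrow> entry_time u k s \<le> j"
  unfolding entry_time_def
  by (rule LeastI[of "\<lambda>j. j \<le> k \<and> u j s = u k s" k], simp) (rule Least_le, simp)


lemma term_le:
  assumes h: "0 < x \<Longrightarrow> 0 < y \<Longrightarrow> a < c" and x: "0 \<le> x" and y: "0 \<le> y"
  shows "x*y*a \<le> x*y*(c::real)"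
proof (cases "0 < x \<and> 0 < y")
  case True
  have "a \<le> c" using h True by auto
  then show ?thesis using x y by (simp add: mult_left_mono)
next
  case False
  have "x = 0 \<or> y = 0" using False x y by linarith
  then show ?thesis by auto
qed

lemma term_lt: "0 < x \<Longrightarrow> 0 < y \<Longrightarrow> a < c \<Longrightarrow> x*y*a < x*y*(c::real)"
  by simp

lemma sum2_const: "(\<Sum>a\<in>UNIV. \<Sum>t\<in>UNIV. pmf p a * pmf (q a) t * c) = (c::real)"
  for p :: "'a::finite pmf" and q :: "'a \<Rightarrow> 'b::finite pmf"
proof -
  have "(\<Sum>a\<in>UNIV. \<Sum>t\<in>UNIV. pmf p a * pmf (q a) t * c) = (\<Sum>a\<in>UNIV. pmf p a * c * (\<Sum>t\<in>UNIV. pmf (q a) t))"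
    by (simp add: sum_distrib_left mult_ac)
  also have "\<dots> = (\<Sum>a\<in>UNIV. pmf p a) * c" by (simp add: sum_pmf_UNIV flip: sum_distrib_right)
  finally show ?thesis by (simp add: sum_pmf_UNIV)
qed

theorem lemma5:
  fixes Gam1 Gam2 :: "'s::finite \<Rightarrow> 'm::finite set"
    and \<delta> :: "'s \<Rightarrow> 'm \<Rightarrow> 'm \<Rightarrow> 's pmf"
    and T :: "'s set"
    and \<zeta> :: "nat \<Rightarrow> 's \<Rightarrow> 'm pmf"
    and k :: nat
  assumes nonempty1: "\<forall>s. Gam1 s \<noteq> {}"
    and nonempty2: "\<forall>s. Gam2 s \<noteq> {}"
    and absorbing: "\<forall>s \<in> T \<union> W2 Gam1 Gam2 \<delta> T. \<forall>a \<in> Gam1 s. \<forall>b \<in> Gam2 s.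
                      \<delta> s a b = return_pmf s"
    and zeta: "\<forall>j \<ge> 1. is_selector Gam1 (\<zeta> j) \<and>
                 Pre1_sel Gam2 \<delta> (\<zeta> j) (val_iter Gam1 Gam2 \<delta> T (j - 1))
                   = Pre1 Gam1 Gam2 \<delta> (val_iter Gam1 Gam2 \<delta> T (j - 1))"
    and k_pos: "k \<ge> 1"
    and pos: "\<forall>s. s \<notin> W2 Gam1 Gam2 \<delta> T \<longrightarrow> val_iter Gam1 Gam2 \<delta> T (k - 1) s > 0"
  shows "\<forall>st2. is_strategy Gam2 st2 \<longrightarrow>
           (\<forall>s. prob_reach \<delta> (memoryless (eta Gam1 \<zeta> (val_iter Gam1 Gam2 \<delta> T) k)) st2
                  (T \<union> W2 Gam1 Gam2 \<delta> T) s = 1)"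
proof (intro allI impI)
  fix st2 :: "'s list \<Rightarrow> 'm pmf" and s0 :: 's
  assume st2: "is_strategy Gam2 st2"
  define u where "u = val_iter Gam1 Gam2 \<delta> T"
  define X where "X = T \<union> W2 Gam1 Gam2 \<delta> T"
  define ent where "ent = entry_time u k"
  define \<eta> where "\<eta> = eta Gam1 \<zeta> u k"
  define st1 where "st1 = memoryless \<eta>"
  define R where "R = reach_within \<delta> st1 st2 X"
  have absT: "\<forall>s\<in>T. \<forall>a\<in>Gam1 s. \<forall>b\<in>Gam2 s. \<delta> s a b = return_pmf s" using absorbing by auto
  have ub: "\<And>j s. 0 \<le> u j s \<and> u j s \<le> 1" unfolding u_def using val_bounds[OF nonempty1 nonempty2] by blast
  have um: "\<And>j j' s. j \<le> j' \<Longrightarrow> u j s \<le> u j' s" unfolding u_def using val_mono[OF nonempty1 nonempty2 absT] by blast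
  have l1: "\<And>s. ent s \<le> k \<and> u (ent s) s = u k s" unfolding ent_def by (rule entry_time_props(1))
  have l2: "\<And>s j. j \<le> k \<Longrightarrow> u j s = u k s \<Longrightarrow> ent s \<le> j" unfolding ent_def by (rule entry_time_props(2))
  have lpos: "0 < ent s" if sX: "s \<notin> X" for s
  proof (rule ccontr)
    assume "\<not> 0 < ent s"
    then have "ent s = 0" by simp
    then have "u k s = 0" using l1[of s] sX by (simp add: u_def X_def)
    moreover have "u (k-1) s > 0" using pos sX by (simp add: u_def X_def)
    moreover have "u (k-1) s \<le> u k s" by (rule um) simp
    ultimately show False by simp
  qed
  have eta_s: "\<eta> s = \<zeta> (ent s) s" if "s \<notin> X" for s using lpos[OF that] by (simp add: \<eta>_def eta_def ent_def)
  define Rel where "Rel = (\<lambda>t s. t \<notin> X \<and> (u k t > u k s \<or> (u k t = u k s \<and> ent t < ent s)))"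
  define Bs where "Bs = (\<lambda>s. {t. t \<in> X \<or> Rel t s})"
  define ind where "ind = (\<lambda>s t. if t \<in> Bs s then 1 else (0::real))"
  define p where "p = (\<lambda>s b. \<Sum>a\<in>UNIV. \<Sum>t\<in>UNIV. pmf (\<eta> s) a * pmf (\<delta> s a b) t * ind s t)"
  have key: "0 < p s b" if sX: "s \<notin> X" and b: "b \<in> Gam2 s" for s b
  proof -
    define j where "j = ent s"
    have j0: "0 < j" using lpos[OF sX] j_def by simp
    define v where "v = u (j - 1)"
    define x2 where "x2 = (\<lambda>s'. if s' = s then return_pmf b else return_pmf (SOME x. x \<in> Gam2 s'))"
    have x2S: "is_selector Gam2 x2" using selector_ex[OF nonempty2] b unfolding is_selector_def x2_def by auto
    have zj: "Pre1_sel Gam2 \<delta> (\<zeta> j) v = Pre1 Gam1 Gam2 \<delta> v" using zeta j0 unfolding v_def u_def by auto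
    have uj: "u j = Pre1 Gam1 Gam2 \<delta> v" unfolding v_def u_def using j0 by (cases j) auto
    have vb: "\<forall>t. 0 \<le> v t \<and> v t \<le> 1" unfolding v_def using ub by blast
    have bddv: "bdd_below ((\<lambda>xi2. Pre_pair \<delta> (\<zeta> j) xi2 v s) ` {xi2. is_selector Gam2 xi2})"
      unfolding Pre_pair_wsum using wsum_bounds[of v] vb by (intro bdd_belowI[of _ 0]) auto
    have "u k s = u j s" using l1[of s] j_def by simp
    also have "\<dots> = Pre1_sel Gam2 \<delta> (\<zeta> j) v s" using uj zj by simp
    also have "\<dots> \<le> Pre_pair \<delta> (\<zeta> j) x2 v s" unfolding Pre1_sel_def by (rule cINF_lower[OF bddv]) (simp add: x2S)
    also have "\<dots> = (\<Sum>a\<in>UNIV. \<Sum>t\<in>UNIV. pmf (\<zeta> j s) a * pmf (\<delta> s a b) t * v t)"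
      unfolding Pre_pair_wsum x2_def by (simp add: wsum_return)
    finally have E: "u k s \<le> (\<Sum>a\<in>UNIV. \<Sum>t\<in>UNIV. pmf (\<zeta> j s) a * pmf (\<delta> s a b) t * v t)" .
    have ex: "\<exists>a t. pmf (\<zeta> j s) a > 0 \<and> pmf (\<delta> s a b) t > 0 \<and> t \<in> Bs s"
    proof (rule ccontr)
      assume nex: "\<not> ?thesis"
      have lt: "v t < u k s" if "pmf (\<zeta> j s) a > 0" "pmf (\<delta> s a b) t > 0" for a t
      proof -
        have tB: "t \<notin> Bs s" using nex that by blast
        have vt: "v t \<le> u k t" unfolding v_def by (rule um) (use l1[of s] j_def in arith)
        moreover have ut: "u k t \<le> u k s" using tB unfolding Bs_def Rel_def by auto
        moreover have "v t \<noteq> u k s"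
        proof
          assume eq: "v t = u k s"
          then have "u k t = u k s" "u (j-1) t = u k t" using vt ut v_def by auto
          moreover have "ent t \<le> j - 1" using l2[of "j-1" t] l1[of s] j_def \<open>u (j-1) t = u k t\<close> by (metis diff_le_self le_trans)
          ultimately have "Rel t s" using tB j0 unfolding Rel_def Bs_def j_def by auto
          then show False using tB unfolding Bs_def by auto
        qed
        ultimately show ?thesis by simp
      qed
      obtain a0 where a0: "a0 \<in> set_pmf (\<zeta> j s)" using set_pmf_not_empty[of "\<zeta> j s"] by blast
      obtain t0 where t0: "t0 \<in> set_pmf (\<delta> s a0 b)" using set_pmf_not_empty[of "\<delta> s a0 b"] by blast
      have "(\<Sum>a\<in>UNIV. \<Sum>t\<in>UNIV. pmf (\<zeta> j s) a * pmf (\<delta> s a b) t * v t)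
            < (\<Sum>a\<in>UNIV. \<Sum>t\<in>UNIV. pmf (\<zeta> j s) a * pmf (\<delta> s a b) t * u k s)"
      proof (rule sum_strict_mono_ex1)
        show "\<forall>a\<in>UNIV. (\<Sum>t\<in>UNIV. pmf (\<zeta> j s) a * pmf (\<delta> s a b) t * v t)
            \<le> (\<Sum>t\<in>UNIV. pmf (\<zeta> j s) a * pmf (\<delta> s a b) t * u k s)"
          by (intro ballI sum_mono term_le lt) auto
        show "\<exists>a\<in>UNIV. (\<Sum>t\<in>UNIV. pmf (\<zeta> j s) a * pmf (\<delta> s a b) t * v t)
            < (\<Sum>t\<in>UNIV. pmf (\<zeta> j s) a * pmf (\<delta> s a b) t * u k s)"
        proof (intro bexI[of _ a0] sum_strict_mono_ex1)
          show "\<forall>t\<in>UNIV. pmf (\<zeta> j s) a0 * pmf (\<delta> s a0 b) t * v t \<le> pmf (\<zeta> j s) a0 * pmf (\<delta> s a0 b) t * u k s"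
            by (intro ballI term_le lt) auto
          show "\<exists>t\<in>UNIV. pmf (\<zeta> j s) a0 * pmf (\<delta> s a0 b) t * v t < pmf (\<zeta> j s) a0 * pmf (\<delta> s a0 b) t * u k s"
            using a0 t0 by (intro bexI[of _ t0] term_lt lt[of a0]) (auto simp: pmf_positive)
        qed auto
      qed auto
      also have "\<dots> = u k s" by (rule sum2_const)
      finally show False using E by simp
    qed
    then obtain a1 t1 where at: "pmf (\<zeta> j s) a1 > 0" "pmf (\<delta> s a1 b) t1 > 0" "t1 \<in> Bs s" by blast
    have nn: "0 \<le> pmf (\<zeta> j s) a * pmf (\<delta> s a b) t * ind s t" for a t by (simp add: ind_def)
    have "0 < pmf (\<zeta> j s) a1 * pmf (\<delta> s a1 b) t1 * ind s t1" using at by (simp add: ind_def)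
    also have "\<dots> \<le> (\<Sum>t\<in>UNIV. pmf (\<zeta> j s) a1 * pmf (\<delta> s a1 b) t * ind s t)"
      by (rule member_le_sum) (auto simp: nn)
    also have "\<dots> \<le> (\<Sum>a\<in>UNIV. \<Sum>t\<in>UNIV. pmf (\<zeta> j s) a * pmf (\<delta> s a b) t * ind s t)"
      by (rule member_le_sum) (auto intro: sum_nonneg nn)
    also have "\<dots> = p s b" unfolding p_def eta_s[OF sX] j_def ..
    finally show ?thesis .
  qed

  define P where "P = (\<lambda>(s,b). p s b) ` {(s,b). s \<notin> X \<and> b \<in> Gam2 s}"
  define eps where "eps = Min (insert 1 P)"
  have finP: "finite P" unfolding P_def by (intro finite_imageI) simp
  have eps_pos: "0 < eps" unfolding eps_def using finP key by (auto simp: P_def)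
  have eps_le1: "eps \<le> 1" unfolding eps_def using finP by simp
  have eps_le: "eps \<le> p s b" if "s \<notin> X" "b \<in> Gam2 s" for s b
    unfolding eps_def using finP that by (intro Min_le) (auto simp: P_def)
  define g where "g = (\<lambda>s. card {t. Rel t s})"
  have Rel_trans: "Rel t' s" if "Rel t' t" "Rel t s" for t' t s
    using that unfolding Rel_def by auto
  have g_dec: "g t < g s" if "Rel t s" for t s
  proof -
    have "{t'. Rel t' t} \<subset> {t'. Rel t' s}"
    proof
      show "{t'. Rel t' t} \<subseteq> {t'. Rel t' s}" using Rel_trans that by blast
      have "\<not> Rel t t" unfolding Rel_def by auto
      then show "{t'. Rel t' t} \<noteq> {t'. Rel t' s}" using that by blast
    qed
    then show ?thesis unfolding g_def by (intro psubset_card_mono) auto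
  qed
  have g_le: "g s \<le> card (UNIV :: 's set)" for s unfolding g_def by (intro card_mono) auto
  have Rb: "0 \<le> R n h \<and> R n h \<le> 1" for n h unfolding R_def by (rule reach_bounds)
  have indl: "eps ^ n \<le> R n h" if "h \<noteq> []" "last h \<in> X \<or> g (last h) < n" for n h
    using that
  proof (induction n arbitrary: h)
    case 0
    then show ?case by (simp add: R_def)
  next
    case (Suc n)
    show ?case
    proof (cases "last h \<in> X")
      case True
      have "eps ^ Suc n \<le> 1" using eps_pos eps_le1 by (intro power_le_one) auto
      then show ?thesis using True by (simp add: R_def del: power_Suc)
    next
      case False
      define s where "s = last h"
      have sX: "s \<notin> X" using False s_def by simp
      have gs: "g s \<le> n" using Suc.prems False s_def by simp
      have "R (Suc n) h = wsum (\<eta> s) (st2 h) (\<delta> s) (\<lambda>t. R n (h @ [t]))"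
        using False unfolding R_def s_def
        by (simp del: reach_within.simps(2) add: reach_Suc' st1_def memoryless_def)
      also have "\<dots> \<ge> wsum (\<eta> s) (st2 h) (\<delta> s) (\<lambda>t. ind s t * eps ^ n)"
      proof (rule wsum_mono)
        fix t
        show "ind s t * eps ^ n \<le> R n (h @ [t])"
        proof (cases "t \<in> Bs s")
          case True
          then have "t \<in> X \<or> g t < n" using g_dec[of t s] gs unfolding Bs_def by auto
          then have "eps ^ n \<le> R n (h @ [t])" by (intro Suc.IH) auto
          then show ?thesis using True by (simp add: ind_def)
        next
          case False
          then show ?thesis using Rb[of n "h @ [t]"] by (simp add: ind_def)
        qed
      qed
      finally have "wsum (\<eta> s) (st2 h) (\<delta> s) (ind s) * eps ^ n \<le> R (Suc n) h"
        by (simp add: wsum_multR)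
      moreover have "wsum (\<eta> s) (st2 h) (\<delta> s) (ind s) = (\<Sum>b\<in>UNIV. pmf (st2 h) b * p s b)"
        unfolding wsum_swap p_def ..
      moreover have "(\<Sum>b\<in>UNIV. pmf (st2 h) b * eps) \<le> (\<Sum>b\<in>UNIV. pmf (st2 h) b * p s b)"
      proof (rule sum_mono)
        fix b
        show "pmf (st2 h) b * eps \<le> pmf (st2 h) b * p s b"
        proof (cases "pmf (st2 h) b = 0")
          case True then show ?thesis by simp
        next
          case False
          then have "b \<in> set_pmf (st2 h)" by (simp add: set_pmf_iff)
          then have "b \<in> Gam2 s" using st2 Suc.prems(1) unfolding is_strategy_def s_def by blast
          then show ?thesis using eps_le[OF sX] by (simp add: mult_left_mono)
        qed
      qed
      moreover have "(\<Sum>b\<in>UNIV. pmf (st2 h) b * eps) = eps"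
        by (simp add: sum_pmf_UNIV flip: sum_distrib_right)
      ultimately have "eps * eps ^ n \<le> R (Suc n) h"
        by (metis (no_types, lifting) dual_order.trans eps_pos less_imp_le mult_right_mono zero_le_power)
      then show ?thesis by simp
    qed
  qed
  define N where "N = Suc (card (UNIV :: 's set))"
  define c where "c = eps ^ N"
  have c0: "0 < c" "c \<le> 1" unfolding c_def using eps_pos eps_le1 by (auto simp: power_le_one)
  have RN: "1 - R N h \<le> 1 - c" if "h \<noteq> []" for h
    using indl[of h N] that g_le[of "last h"] unfolding c_def N_def by simp
  have iter: "1 - R (j * N) h \<le> (1 - c) ^ j" if "h \<noteq> []" for j h
    using that
  proof (induction j arbitrary: h)
    case 0 then show ?case using Rb[of 0 h] by simp
  next
    case (Suc j)
    have "1 - R (N + j * N) h \<le> (1 - R N h) * (1 - c) ^ j"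
      unfolding R_def
      by (rule reach_compose[where B = "(1 - c) ^ j"]) (use Suc c0 in \<open>auto simp: R_def\<close>)
    also have "\<dots> \<le> (1 - c) * (1 - c) ^ j"
      by (rule mult_right_mono) (use RN[OF Suc.prems] c0 in auto)
    finally show ?case by (simp add: add.commute)
  qed
  have bdd: "bdd_above (range (\<lambda>n. R n [s0]))" using Rb by (intro bdd_aboveI[of _ 1]) auto
  have le1: "(SUP n. R n [s0]) \<le> 1" using Rb by (intro cSUP_least) auto
  have ge1: "1 \<le> (SUP n. R n [s0])"
  proof (rule ccontr)
    assume "\<not> 1 \<le> (SUP n. R n [s0])"
    then have lt: "0 < 1 - (SUP n. R n [s0])" by simp
    obtain j where j: "(1 - c) ^ j < 1 - (SUP n. R n [s0])"
      using real_arch_pow_inv[OF lt, of "1 - c"] c0 by auto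
    have "R (j * N) [s0] \<le> (SUP n. R n [s0])" by (rule cSUP_upper[OF _ bdd]) simp
    moreover have "1 - R (j * N) [s0] \<le> (1 - c) ^ j" by (rule iter) simp
    ultimately show False using j by simp
  qed
  have "prob_reach \<delta> st1 st2 X s0 = 1"
    unfolding prob_reach_def using le1 ge1 unfolding R_def by simp
  then show "prob_reach \<delta> (memoryless (eta Gam1 \<zeta> (val_iter Gam1 Gam2 \<delta> T) k)) st2
                  (T \<union> W2 Gam1 Gam2 \<delta> T) s0 = 1"
    unfolding st1_def \<eta>_def u_def X_def .
qed

end
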